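(* Let $q$ be a prime power and let $n,k,\delta,\alpha$ be positive integers with $k\le n$, $\alpha\ge 2$ and $\delta\le(\alpha-1)k$. Put $h=\left\lfloor k+1-\frac{\delta}{\alpha-1}\right\rfloor$. Then $$B_q(n,k,\delta;\alpha)\le(\alpha-1)\frac{\left[{n\atop h}\right]_q}{\left[{k\atop h}\right]_q}.$$
   Context: For a prime power $q$, $\mathcal{G}_q(n,k)$ denotes the set of all $k$-dimensional subspaces of $\mathbb{F}_q^n$, and the Gaussian binomial coefficient is $\left[{n\atop k}\right]_q=\prod_{i=0}^{k-1}\frac{q^n-q^i}{q^k-q^i}=|\mathcal{G}_q(n,k)|$. An $\alpha$-$(n,k,\delta)_q^c$ covering Grassmannian code is a subset $\mathcal{C}\subseteq\mathcal{G}_q(n,k)$ (no repeated codewords) such that every set of $\alpha$ distinct codewords of $\mathcal{C}$ spans a subspace of $\mathbb{F}_q^n$ of dimension at least $k+\delta$. $B_q(n,k,\delta;\alpha)$ denotes the maximum size of an $\alpha$-$(n,k,\delta)_q^c$ code. *)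

theory Defs
  imports "HOL-Analysis.Analysis"
begin

definition gauss_binom :: "nat \<Rightarrow> nat \<Rightarrow> nat \<Rightarrow> real" where
  "gauss_binom q n k = (\<Prod>i<k. (real q ^ n - real q ^ i) / (real q ^ k - real q ^ i))"

text \<open>The Grassmannian G_q(n,k): all k-dimensional subspaces of F^n, where the field F
  is the finite type 'a (of order q = CARD('a)) and n = CARD('n).\<close>
definition grassmannian :: "nat \<Rightarrow> ('a::field ^ 'n) set set" where
  "grassmannian k = {U. vec.subspace U \<and> vec.dim U = k}"

definition covering_code :: "nat \<Rightarrow> nat \<Rightarrow> nat \<Rightarrow> ('a::field ^ 'n) set set \<Rightarrow> bool" where
  "covering_code k \<delta> \<alpha> C \<longleftrightarrow> C \<subseteq> grassmannian k \<and>
     (\<forall>A \<subseteq> C. card A = \<alpha> \<longrightarrow> vec.dim (vec.span (\<Union>A)) \<ge> k + \<delta>)"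

definition B_cov :: "('a::{finite,field} ^ 'n) itself \<Rightarrow> nat \<Rightarrow> nat \<Rightarrow> nat \<Rightarrow> nat" where
  "B_cov _ k \<delta> \<alpha> = Max {card C | C :: ('a ^ 'n) set set. covering_code k \<delta> \<alpha> C}"

end

theory Submission imports Defs begin

lemma card_span_indep:
  fixes B :: "('a::{finite,field}^'n) set"
  assumes "vec.independent B"
  shows "card (vec.span B) = CARD('a) ^ card B"
proof -
  have "finite B" by simp
  then show ?thesis using assms
  proof (induction B rule: finite_induct)
    case empty then show ?case by simp
  next
    case (insert x F)
    have indF: "vec.independent F" and xF: "x \<notin> vec.span F"
      using insert.prems insert.hyps by (auto simp: vec.independent_insert)
    have eq: "vec.span (insert x F) = (\<lambda>(a,s). a *s x + s) ` (UNIV \<times> vec.span F)"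
    proof (auto simp: vec.span_insert)
      fix y k assume "y - k *s x \<in> vec.span F"
      then show "y \<in> (\<lambda>(a,s). a *s x + s) ` (UNIV \<times> vec.span F)"
        by (intro image_eqI[where x="(k, y - k *s x)"]) auto
    next
      fix a b assume "b \<in> vec.span F"
      then show "\<exists>k. a *s x + b - k *s x \<in> vec.span F"
        by (intro exI[where x=a]) simp
    qed
    have inj: "inj_on (\<lambda>(a,s). a *s x + s) (UNIV \<times> vec.span F)"
    proof (rule inj_onI, clarsimp)
      fix a s b t assume s: "s \<in> vec.span F" and t: "t \<in> vec.span F"
        and e: "a *s x + s = b *s x + t"
      have "(a - b) *s x = t - s" using e by (simp add: algebra_simps vector_sadd_rdistrib vector_ssub_ldistrib)
      hence "(a - b) *s x \<in> vec.span F" using s t by (simp add: vec.span_diff)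
      hence sp: "(a - b) *s x \<in> vec.span F" .
      have "a = b"
      proof (rule ccontr)
        assume "a \<noteq> b"
        hence "x = inverse (a - b) *s ((a - b) *s x)" by (metis vector_smult_assoc left_inverse right_minus_eq vector_smult_lid)
        hence "x \<in> vec.span F" using sp by (metis vec.span_scale)
        thus False using xF by simp
      qed
      then show "a = b \<and> s = t" using e by simp
    qed
    have "card (vec.span (insert x F)) = CARD('a) * card (vec.span F)"
      unfolding eq by (simp add: card_image[OF inj] card_cartesian_product)
    then show ?case using insert indF by simp
  qed
qed

lemma card_subspace:
  fixes U :: "('a::{finite,field}^'n) set"
  assumes "vec.subspace U"
  shows "card U = CARD('a) ^ vec.dim U"
proof -
  obtain B where B: "B \<subseteq> U" "vec.independent B" "U \<subseteq> vec.span B" "card B = vec.dim U"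
    by (rule vec.basis_exists)
  have "vec.span B = U" using B assms by (simp add: vec.span_subspace)
  then show ?thesis using card_span_indep[OF B(2)] B(4) by simp
qed

definition Ind :: "('a::field^'n) set \<Rightarrow> nat \<Rightarrow> ('a^'n) list set" where
  "Ind U m = {xs. length xs = m \<and> set xs \<subseteq> U \<and> vec.independent (set xs) \<and> distinct xs}"

lemma finite_Ind: "finite (Ind (U::('a::{finite,field}^'n) set) m)"
proof -
  have "Ind U m \<subseteq> {xs. set xs \<subseteq> UNIV \<and> length xs = m}" by (auto simp: Ind_def)
  moreover have "finite {xs. set xs \<subseteq> (UNIV::('a^'n) set) \<and> length xs = m}"
    by (rule finite_lists_length_eq) simp
  ultimately show ?thesis by (rule finite_subset)
qed

lemma card_Ind:
  fixes U :: "('a::{finite,field}^'n) set"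
  assumes U: "vec.subspace U" and "m \<le> vec.dim U"
  shows "card (Ind U m) = (\<Prod>i<m. CARD('a) ^ vec.dim U - CARD('a) ^ i)"
  using assms(2)
proof (induction m)
  case 0
  have "Ind U 0 = {[]}" by (auto simp: Ind_def vec.independent_empty)
  then show ?case by simp
next
  case (Suc m)
  let ?q = "CARD('a)" let ?d = "vec.dim U"
  have eq: "Ind U (Suc m) = (\<lambda>(xs,x). x # xs) ` (SIGMA xs:Ind U m. U - vec.span (set xs))"
  proof (rule set_eqI, rule iffI)
    fix ys assume ys: "ys \<in> Ind U (Suc m)"
    then obtain x xs where ys_eq: "ys = x # xs" by (cases ys) (auto simp: Ind_def)
    have "xs \<in> Ind U m" "x \<in> U" "x \<notin> vec.span (set xs)"
      using ys unfolding ys_eq Ind_def by (auto simp: vec.independent_insert)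
    then show "ys \<in> (\<lambda>(xs,x). x # xs) ` (SIGMA xs:Ind U m. U - vec.span (set xs))"
      unfolding ys_eq by force
  next
    fix ys assume "ys \<in> (\<lambda>(xs,x). x # xs) ` (SIGMA xs:Ind U m. U - vec.span (set xs))"
    then obtain xs x where ys_eq: "ys = x # xs" and xs: "xs \<in> Ind U m" and x: "x \<in> U" "x \<notin> vec.span (set xs)"
      by auto
    have "x \<notin> set xs" using x(2) vec.span_base by blast
    then show "ys \<in> Ind U (Suc m)" using xs x unfolding ys_eq Ind_def
      by (auto simp: vec.independent_insert)
  qed
  have inj: "inj_on (\<lambda>(xs,x). x # xs) (SIGMA xs:Ind U m. U - vec.span (set xs))"
    by (rule inj_onI) auto
  have cU: "card U = ?q ^ ?d" by (rule card_subspace[OF U])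
  have each: "card (U - vec.span (set xs)) = ?q ^ ?d - ?q ^ m" if "xs \<in> Ind U m" for xs
  proof -
    have xs: "length xs = m" "set xs \<subseteq> U" "vec.independent (set xs)" "distinct xs"
      using that by (auto simp: Ind_def)
    have sub: "vec.span (set xs) \<subseteq> U" using xs(2) U by (rule vec.span_minimal)
    have "card (vec.span (set xs)) = ?q ^ m"
      using card_span_indep[OF xs(3)] xs(1,4) by (simp add: distinct_card)
    then show ?thesis using sub cU by (simp add: card_Diff_subset finite_subset)
  qed
  have "card (Ind U (Suc m)) = (\<Sum>xs\<in>Ind U m. card (U - vec.span (set xs)))"
    unfolding eq card_image[OF inj] by (rule card_SigmaI) (simp_all add: finite_Ind)
  also have "\<dots> = card (Ind U m) * (?q ^ ?d - ?q ^ m)" using each by simp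
  also have "\<dots> = (\<Prod>i<Suc m. ?q ^ ?d - ?q ^ i)" using Suc by simp
  finally show ?case .
qed

lemma few_containing:
  fixes C :: "('a::{finite,field}^'n) set set"
  assumes cc: "covering_code k \<delta> \<alpha> C" and xs: "xs \<in> Ind UNIV h" and hk: "h \<le> k"
    and key: "h + \<alpha> * (k - h) < k + \<delta>"
  shows "card {U\<in>C. set xs \<subseteq> U} \<le> \<alpha> - 1"
proof (rule ccontr)
  assume "\<not> ?thesis"
  hence "\<alpha> \<le> card {U\<in>C. set xs \<subseteq> U}" by simp
  then obtain A where A: "A \<subseteq> {U\<in>C. set xs \<subseteq> U}" "card A = \<alpha>" "finite A"
    by (rule obtain_subset_with_card_n)
  have AC: "A \<subseteq> C" using A by auto
  hence big: "vec.dim (vec.span (\<Union>A)) \<ge> k + \<delta>" using cc A(2) by (auto simp: covering_code_def)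
  have xsd: "length xs = h" "vec.independent (set xs)" "distinct xs" using xs by (auto simp: Ind_def)
  have "\<forall>U\<in>A. \<exists>B. set xs \<subseteq> B \<and> B \<subseteq> U \<and> vec.independent B \<and> U \<subseteq> vec.span B"
  proof
    fix U assume "U \<in> A"
    hence "set xs \<subseteq> U" using A by auto
    then obtain B where "set xs \<subseteq> B" "B \<subseteq> U" "vec.independent B" "U \<subseteq> vec.span B"
      using xsd(2) by (rule vec.maximal_independent_subset_extend)
    thus "\<exists>B. set xs \<subseteq> B \<and> B \<subseteq> U \<and> vec.independent B \<and> U \<subseteq> vec.span B" by blast
  qed
  then obtain Bf where Bf: "\<And>U. U \<in> A \<Longrightarrow> set xs \<subseteq> Bf U \<and> Bf U \<subseteq> U \<and> vec.independent (Bf U) \<and> U \<subseteq> vec.span (Bf U)"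
    by metis
  have cardB: "card (Bf U - set xs) = k - h" if "U \<in> A" for U
  proof -
    have "U \<in> grassmannian k" using that AC cc by (auto simp: covering_code_def)
    hence "vec.dim U = k" by (simp add: grassmannian_def)
    hence "card (Bf U) = k" using Bf[OF that] vec.basis_card_eq_dim by metis
    thus ?thesis using Bf[OF that] xsd by (simp add: card_Diff_subset distinct_card)
  qed
  define G where "G = set xs \<union> (\<Union>U\<in>A. Bf U - set xs)"
  have "\<Union>A \<subseteq> vec.span G"
  proof
    fix v assume "v \<in> \<Union>A"
    then obtain U where U: "U \<in> A" "v \<in> U" by auto
    have "Bf U \<subseteq> G" using Bf[OF U(1)] U(1) unfolding G_def by blast
    hence "vec.span (Bf U) \<subseteq> vec.span G" by (rule vec.span_mono)
    thus "v \<in> vec.span G" using Bf[OF U(1)] U(2) by blast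
  qed
  hence "vec.dim (\<Union>A) \<le> card G" by (rule vec.dim_le_card) simp
  also have "card G \<le> card (set xs) + card (\<Union>U\<in>A. Bf U - set xs)"
    unfolding G_def by (rule card_Un_le)
  also have "card (\<Union>U\<in>A. Bf U - set xs) \<le> (\<Sum>U\<in>A. card (Bf U - set xs))"
    by (rule card_UN_le) (rule A(3))
  also have "(\<Sum>U\<in>A. card (Bf U - set xs)) = \<alpha> * (k - h)" using cardB A(2) by simp
  finally have "vec.dim (\<Union>A) \<le> h + \<alpha> * (k - h)" using xsd by (simp add: distinct_card)
  thus False using big key by simp
qed

lemma count_bound:
  fixes C :: "('a::{finite,field}^'n) set set"
  assumes cc: "covering_code k \<delta> \<alpha> C" and hk: "h \<le> k" and kn: "k \<le> CARD('n)"
    and key: "h + \<alpha> * (k - h) < k + \<delta>"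
  shows "card C * (\<Prod>i<h. CARD('a) ^ k - CARD('a) ^ i)
         \<le> (\<alpha> - 1) * (\<Prod>i<h. CARD('a) ^ CARD('n) - CARD('a) ^ i)"
proof -
  let ?T = "Ind (UNIV::('a^'n) set) h"
  have finC: "finite C" by simp
  have each: "card (Ind U h) = (\<Prod>i<h. CARD('a) ^ k - CARD('a) ^ i)" if "U \<in> C" for U
  proof -
    have "U \<in> grassmannian k" using that cc by (auto simp: covering_code_def)
    hence "vec.subspace U" "vec.dim U = k" by (auto simp: grassmannian_def)
    thus ?thesis using card_Ind[of U h] hk by simp
  qed
  have cT: "card ?T = (\<Prod>i<h. CARD('a) ^ CARD('n) - CARD('a) ^ i)"
    using card_Ind[of "UNIV::('a^'n) set" h] hk kn vec_dim_card[where 'a='a and 'n='n]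
    by (simp add: vec.subspace_UNIV del: vec.dim_UNIV)
  have "card C * (\<Prod>i<h. CARD('a) ^ k - CARD('a) ^ i) = (\<Sum>U\<in>C. card (Ind U h))"
    using each by simp
  also have "\<dots> = card (SIGMA U:C. Ind U h)"
    by (rule card_SigmaI[symmetric]) (simp_all add: finite_Ind)
  also have "(SIGMA U:C. Ind U h) = prod.swap ` (SIGMA xs:?T. {U\<in>C. set xs \<subseteq> U})"
    by (auto simp: Ind_def image_iff)
  also have "card \<dots> = card (SIGMA xs:?T. {U\<in>C. set xs \<subseteq> U})"
    by (rule card_image) (simp add: inj_on_def)
  also have "\<dots> = (\<Sum>xs\<in>?T. card {U\<in>C. set xs \<subseteq> U})"
    by (rule card_SigmaI) (simp_all add: finite_Ind)
  also have "\<dots> \<le> (\<Sum>xs\<in>?T. \<alpha> - 1)"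
    by (rule sum_mono) (rule few_containing[OF cc _ hk key])
  also have "\<dots> = (\<alpha> - 1) * card ?T" by simp
  finally show ?thesis using cT by simp
qed

lemma card_field_ge2: "2 \<le> CARD('a::{finite,field})"
proof -
  have "card {0::'a, 1} = 2" by simp
  moreover have "card {0::'a, 1} \<le> CARD('a)" by (rule card_mono) auto
  ultimately show ?thesis by simp
qed

lemma real_prod_diff:
  assumes "h \<le> m" "1 \<le> q"
  shows "real (\<Prod>i<h. q ^ m - q ^ i) = (\<Prod>i<h. real q ^ m - real q ^ i)"
proof -
  have "\<And>i. i < h \<Longrightarrow> q ^ i \<le> q ^ m" using assms by (simp add: power_increasing)
  then show ?thesis by (simp add: of_nat_prod of_nat_diff)
qed

lemma prod_pos:
  assumes "h \<le> m" "2 \<le> q"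
  shows "(\<Prod>i<h. real q ^ m - real q ^ i) > 0"
proof (rule prod_pos)
  fix i assume "i \<in> {..<h}"
  hence "i < m" using assms by auto
  hence "real q ^ i < real q ^ m" using assms by (intro power_strict_increasing) auto
  thus "real q ^ m - real q ^ i > 0" by simp
qed

theorem mainTheorem1:
  fixes k \<delta> \<alpha> :: nat
  assumes "1 \<le> k" and "k \<le> CARD('n::finite)"
    and "1 \<le> \<delta>" and "2 \<le> \<alpha>"
    and "\<delta> \<le> (\<alpha> - 1) * k"
  shows "real (B_cov TYPE('a::{finite,field} ^ 'n) k \<delta> \<alpha>)
     \<le> real (\<alpha> - 1) *
        gauss_binom CARD('a) CARD('n) (nat \<lfloor>real k + 1 - real \<delta> / real (\<alpha> - 1)\<rfloor>)
      / gauss_binom CARD('a) k (nat \<lfloor>real k + 1 - real \<delta> / real (\<alpha> - 1)\<rfloor>)"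
proof -
  define r where "r = real \<delta> / real (\<alpha> - 1)"
  define h where "h = nat \<lfloor>real k + 1 - r\<rfloor>"
  define q where "q = CARD('a)"
  define n where "n = CARD('n)"
  have a1: "real (\<alpha> - 1) > 0" using assms by simp
  have rpos: "r > 0" using assms a1 by (simp add: r_def)
  have rk: "r \<le> real k"
  proof -
    have "real \<delta> \<le> real (\<alpha> - 1) * real k" using assms(5) by (metis of_nat_le_iff of_nat_mult)
    thus ?thesis using a1 by (simp add: r_def divide_le_eq mult.commute)
  qed
  have fl: "\<lfloor>real k + 1 - r\<rfloor> \<ge> 0" using rk by simp
  have hreal: "real h = of_int \<lfloor>real k + 1 - r\<rfloor>" using fl by (simp add: h_def)
  have "real h \<le> real k + 1 - r" using hreal by linarith
  hence "real h < real k + 1" using rpos by linarith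
  hence hk: "h \<le> k" by linarith
  have "real h > real k - r" using hreal by linarith
  hence "real k - real h < r" by linarith
  hence "real (\<alpha> - 1) * (real k - real h) < real (\<alpha> - 1) * r" using a1 by simp
  also have "\<dots> = real \<delta>" using a1 by (simp add: r_def)
  finally have "real ((\<alpha> - 1) * (k - h)) < real \<delta>" using hk by (simp add: of_nat_diff)
  hence lt: "(\<alpha> - 1) * (k - h) < \<delta>" by linarith
  have "\<alpha> * (k - h) = (\<alpha> - 1) * (k - h) + (k - h)" using assms(4)
    by (metis Suc_diff_1 add.commute less_le_trans mult_Suc pos2)
  hence key: "h + \<alpha> * (k - h) < k + \<delta>" using lt hk by simp
  have q2: "2 \<le> q" unfolding q_def by (rule card_field_ge2)
  have hn: "h \<le> n" using hk assms(2) by (simp add: n_def)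
  define Pk where "Pk = (\<Prod>i<h. real q ^ k - real q ^ i)"
  define Pn where "Pn = (\<Prod>i<h. real q ^ n - real q ^ i)"
  define Ph where "Ph = (\<Prod>i<h. real q ^ h - real q ^ i)"
  have Pkpos: "Pk > 0" unfolding Pk_def using hk q2 by (rule prod_pos)
  have Phpos: "Ph > 0" unfolding Ph_def using q2 by (intro prod_pos) auto
  have gn: "gauss_binom q n h = Pn / Ph"
    unfolding gauss_binom_def Pn_def Ph_def by (rule prod_dividef)
  have gk: "gauss_binom q k h = Pk / Ph"
    unfolding gauss_binom_def Pk_def Ph_def by (rule prod_dividef)
  have rhs: "real (\<alpha> - 1) * gauss_binom q n h / gauss_binom q k h = real (\<alpha> - 1) * Pn / Pk"
    using Phpos Pkpos unfolding gn gk by (simp add: field_simps)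
  have bound: "real (card C) \<le> real (\<alpha> - 1) * Pn / Pk" if cc: "covering_code k \<delta> \<alpha> (C::('a^'n) set set)" for C
  proof -
    have "card C * (\<Prod>i<h. q ^ k - q ^ i) \<le> (\<alpha> - 1) * (\<Prod>i<h. q ^ n - q ^ i)"
      unfolding q_def n_def by (rule count_bound[OF cc hk assms(2) key])
    hence "real (card C) * real (\<Prod>i<h. q ^ k - q ^ i) \<le> real (\<alpha> - 1) * real (\<Prod>i<h. q ^ n - q ^ i)"
      by (metis of_nat_le_iff of_nat_mult)
    hence "real (card C) * Pk \<le> real (\<alpha> - 1) * Pn"
      unfolding Pk_def Pn_def using real_prod_diff[OF hk, of q] real_prod_diff[OF hn, of q] q2 by simp
    thus ?thesis using Pkpos by (simp add: field_simps)
  qed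
  define S where "S = {card C | C :: ('a ^ 'n) set set. covering_code k \<delta> \<alpha> C}"
  have "S \<subseteq> card ` (UNIV :: ('a ^ 'n) set set set)" unfolding S_def by auto
  hence finS: "finite S" by (rule finite_subset) simp
  have "covering_code k \<delta> \<alpha> ({} :: ('a ^ 'n) set set)"
    using assms(4) by (auto simp: covering_code_def)
  hence "S \<noteq> {}" unfolding S_def by blast
  hence "Max S \<in> S" using finS by (rule Max_in[rotated])
  then obtain C :: "('a ^ 'n) set set" where C: "covering_code k \<delta> \<alpha> C" "Max S = card C"
    unfolding S_def by auto
  have "B_cov TYPE('a ^ 'n) k \<delta> \<alpha> = card C" using C(2) by (simp add: B_cov_def S_def)
  hence "real (B_cov TYPE('a ^ 'n) k \<delta> \<alpha>) \<le> real (\<alpha> - 1) * Pn / Pk" using bound[OF C(1)] by simp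
  thus ?thesis using rhs unfolding h_def r_def q_def n_def by simp
qed

end
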